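(* Let $\phi_0:\mathcal{F}_{\eta_1,\lambda}\to\mathcal{F}_{\eta_2,\lambda}$ be a Virasoro-module homomorphism, i.e. $[L_m,\phi_0]=0$ for all $m\in\mathbb{Z}$, where $\eta_1\neq\eta_2$. Put $k_\phi=\eta_2-\eta_1$ and $$\phi_n=\frac{1}{k_\phi}[\alpha_n,\phi_0]\qquad(n\in\mathbb{Z}).$$ Then: 1. The $n=0$ case recovers the original map: $\frac{1}{k_\phi}[\alpha_0,\phi_0]=\phi_0$. 2. For all $m,n\in\mathbb{Z}$, $[L_m,\phi_n]=-n\,\phi_{m+n}$. 3. Consequently, for all $m,n\in\mathbb{Z}$, $$[L_m,\phi_n]-[L_n,\phi_m]=(m-n)\,\phi_{m+n}.$$ 4. The operators $L_n\mapsto\begin{pmatrix}L_n&\phi_n\\0&L_n\end{pmatrix}$ define a representation of the Virasoro algebra, of central charge $1-12\lambda^2$, on $\mathcal{F}_{\eta_2,\lambda}\oplus\mathcal{F}_{\eta_1,\lambda}$.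
   Context: The Heisenberg algebra has modes $\alpha_n$ ($n\in\mathbb{Z}$) with $[\alpha_m,\alpha_n]=m\delta_{m,-n}$. $\mathcal{F}_\eta$ is the Fock space generated by a vacuum $|\eta\rangle$ with $\alpha_n|\eta\rangle=0$ for $n>0$ and $\alpha_0|\eta\rangle=\eta|\eta\rangle$; $\alpha_0$ acts on all of $\mathcal{F}_\eta$ as the scalar $\eta$. $\mathcal{F}_{\eta,\lambda}$ denotes $\mathcal{F}_\eta$ with the Virasoro action $$L_n=\tfrac12\sum_k:\alpha_k\alpha_{n-k}:-\lambda(n+1)\alpha_n,$$ where normal ordering places positive-index modes to the right. In $[\alpha_n,\phi_0]=\alpha_n\phi_0-\phi_0\alpha_n$, the mode $\alpha_n$ acts on the target space in the first term and on the source space in the second. The matrix in part 4 means $L_n(u,w)=(L_nu+\phi_nw,\,L_nw)$. *)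

theory Defs
  imports Complex_Main "HOL-Library.Multiset" "HOL-Library.Groups_Big_Fun"
begin

text \<open>Concrete model of the Fock space: a vector is a finitely supported family of
coefficients indexed by multisets of positive integers; the multiset M stands for
the basis vector (product over n in M of alpha_{-n}) applied to the vacuum.\<close>

type_synonym fvec = "nat multiset \<Rightarrow> complex"

definition fock_space :: "fvec set" where
  "fock_space = {v. finite {M. v M \<noteq> 0} \<and> (\<forall>M. v M \<noteq> 0 \<longrightarrow> 0 \<notin># M)}"

definition vadd :: "fvec \<Rightarrow> fvec \<Rightarrow> fvec" where
  "vadd u v = (\<lambda>M. u M + v M)"

definition vsub :: "fvec \<Rightarrow> fvec \<Rightarrow> fvec" where
  "vsub u v = (\<lambda>M. u M - v M)"

definition vscale :: "complex \<Rightarrow> fvec \<Rightarrow> fvec" where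
  "vscale c v = (\<lambda>M. c * v M)"

text \<open>Heisenberg mode alpha_n on F_eta: alpha_{-n} (n>0) is creation, alpha_n (n>0)
acts as n d/dx_n, alpha_0 acts as the scalar eta.\<close>
definition heis :: "complex \<Rightarrow> int \<Rightarrow> fvec \<Rightarrow> fvec" where
  "heis eta n v = (\<lambda>M.
     if n = 0 then eta * v M
     else if n < 0 then (if nat (- n) \<in># M then v (M - {#nat (- n)#}) else 0)
     else of_int n * of_nat (count M (nat n) + 1) * v (M + {#nat n#}))"

definition nord :: "complex \<Rightarrow> int \<Rightarrow> int \<Rightarrow> fvec \<Rightarrow> fvec" where
  "nord eta a b v = (if a \<le> b then heis eta a (heis eta b v) else heis eta b (heis eta a v))"

definition vir :: "complex \<Rightarrow> complex \<Rightarrow> int \<Rightarrow> fvec \<Rightarrow> fvec" where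
  "vir eta lam n v = (\<lambda>M. (1/2) * Sum_any (\<lambda>k. nord eta k (n - k) v M)
                         - lam * of_int (n + 1) * heis eta n v M)"

definition vcomm :: "complex \<Rightarrow> complex \<Rightarrow> complex \<Rightarrow> int \<Rightarrow> (fvec \<Rightarrow> fvec) \<Rightarrow> fvec \<Rightarrow> fvec" where
  "vcomm eta1 eta2 lam m psi v = vsub (vir eta2 lam m (psi v)) (psi (vir eta1 lam m v))"

definition phi_mode :: "complex \<Rightarrow> complex \<Rightarrow> (fvec \<Rightarrow> fvec) \<Rightarrow> int \<Rightarrow> fvec \<Rightarrow> fvec" where
  "phi_mode eta1 eta2 phi0 n v =
     vscale (1 / (eta2 - eta1)) (vsub (heis eta2 n (phi0 v)) (phi0 (heis eta1 n v)))"

definition ext_op :: "complex \<Rightarrow> complex \<Rightarrow> complex \<Rightarrow> (fvec \<Rightarrow> fvec) \<Rightarrow> int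
                       \<Rightarrow> fvec \<times> fvec \<Rightarrow> fvec \<times> fvec" where
  "ext_op eta1 eta2 lam phi0 n x =
     (vadd (vir eta2 lam n (fst x)) (phi_mode eta1 eta2 phi0 n (snd x)), vir eta1 lam n (snd x))"

definition padd :: "fvec \<times> fvec \<Rightarrow> fvec \<times> fvec \<Rightarrow> fvec \<times> fvec" where
  "padd x y = (vadd (fst x) (fst y), vadd (snd x) (snd y))"

definition psub :: "fvec \<times> fvec \<Rightarrow> fvec \<times> fvec \<Rightarrow> fvec \<times> fvec" where
  "psub x y = (vsub (fst x) (fst y), vsub (snd x) (snd y))"

definition pscale :: "complex \<Rightarrow> fvec \<times> fvec \<Rightarrow> fvec \<times> fvec" where
  "pscale c x = (vscale c (fst x), vscale c (snd x))"

end

theory Submission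
  imports Defs
begin


definition hidx :: "int \<Rightarrow> nat multiset \<Rightarrow> nat multiset" where
  "hidx n M = (if n = 0 then M else if n < 0 then M - {#nat (-n)#} else M + {#nat n#})"

definition hcoef :: "complex \<Rightarrow> int \<Rightarrow> nat multiset \<Rightarrow> complex" where
  "hcoef eta n M = (if n = 0 then eta else if n < 0 then (if nat (-n) \<in># M then 1 else 0)
      else of_int n * of_nat (count M (nat n) + 1))"

lemma heis_eq: "heis eta n v M = hcoef eta n M * v (hidx n M)"
  by (simp add: heis_def hcoef_def hidx_def)

lemma heis_comm:
  "heis e a (heis e b v) M = heis e b (heis e a v) M + (if a + b = 0 then of_int a * v M else 0)"
proof -
  consider "a = 0" | "b = 0" | "a < 0" "b < 0" | "a > 0" "b > 0" | "a < 0" "b > 0" | "a > 0" "b < 0"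
    by linarith
  then show ?thesis
  proof cases
    case 1 then show ?thesis by (simp add: heis_eq hcoef_def hidx_def)
  next
    case 2 then show ?thesis by (simp add: heis_eq hcoef_def hidx_def)
  next
    case 3 then show ?thesis
      apply (simp add: heis_eq hcoef_def hidx_def)
      apply (auto simp: diff_right_commute in_diff_count add_mset_commute)
      done
  next
    case 4 then show ?thesis
      by (auto simp add: heis_eq hcoef_def hidx_def algebra_simps add.commute add.left_commute)
  next
    case 5
    then obtain j k where j: "a = - int j" "j > 0" and k: "b = int k" "k > 0"
      by (intro that[of "nat (-a)" "nat b"]) auto
    show ?thesis
    proof (cases "j = k")
      case True
      then show ?thesis using j k
        by (auto simp: heis_eq hcoef_def hidx_def algebra_simps not_in_iff)
    next
      case False
      then show ?thesis using j k
        by (auto simp: heis_eq hcoef_def hidx_def algebra_simps in_diff_count diff_union_swap2 count_diff)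
    qed
  next
    case 6
    then obtain j k where j: "b = - int j" "j > 0" and k: "a = int k" "k > 0"
      by (intro that[of "nat (-b)" "nat a"]) auto
    show ?thesis
    proof (cases "j = k")
      case True
      then show ?thesis using j k
        by (auto simp: heis_eq hcoef_def hidx_def algebra_simps not_in_iff)
    next
      case False
      then show ?thesis using j k
        by (auto simp: heis_eq hcoef_def hidx_def algebra_simps in_diff_count diff_union_swap2 count_diff)
    qed
  qed
qed



declare of_nat_sum_mset[simp del]

lemma sum_mset_remove: "x \<in># M \<Longrightarrow> sum_mset M = x + sum_mset (M - {#x#})"
proof -
  assume "x \<in># M"
  then obtain N where "M = add_mset x N" by (blast dest: multi_member_split)
  then show ?thesis by simp
qed

lemma mem_le_sum_mset: "x \<in># M \<Longrightarrow> x \<le> sum_mset (M::nat multiset)"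
proof -
  assume "x \<in># M"
  then have "sum_mset M = x + sum_mset (M - {#x#})" by (rule sum_mset_remove)
  then show ?thesis by simp
qed

lemma nord_eq: "nord e a b v M = heis e a (heis e b v) M - (if b < a \<and> a + b = 0 then of_int a * v M else 0)"
proof (cases "a \<le> b")
  case True then show ?thesis by (simp add: nord_def)
next
  case False
  have "nord e a b v M = heis e b (heis e a v) M" using False by (simp add: nord_def)
  also have "\<dots> = heis e a (heis e b v) M + (if b + a = 0 then of_int b * v M else 0)"
    by (rule heis_comm)
  finally have X: "nord e a b v M = heis e a (heis e b v) M + (if b + a = 0 then of_int b * v M else 0)" .
  show ?thesis
  proof (cases "a + b = 0")
    case True
    then have "b = - a" by simp
    then show ?thesis using X False by simp
  qed (use X in \<open>simp add: add.commute\<close>)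
qed

definition bnd :: "nat multiset \<Rightarrow> int \<Rightarrow> int" where
  "bnd M n = int (sum_mset M) + \<bar>n\<bar>"

lemma nord_bound:
  assumes "nord e k (n - k) v M \<noteq> 0"
  shows "\<bar>k\<bar> \<le> bnd M n"
proof -
  define a where "a = min k (n - k)"
  have "hcoef e a M \<noteq> 0"
    using assms unfolding a_def nord_def by (auto simp: heis_eq min_def split: if_splits)
  then have "a < 0 \<Longrightarrow> nat (- a) \<le> sum_mset M"
    by (auto simp: hcoef_def intro: mem_le_sum_mset split: if_splits)
  then have "a < 0 \<Longrightarrow> - a \<le> int (sum_mset M)" by linarith
  moreover have "int (sum_mset M) \<ge> 0" using of_nat_0_le_iff by blast
  ultimately have "\<exists>s. s = int (sum_mset M) \<and> s \<ge> 0 \<and> (a < 0 \<longrightarrow> - a \<le> s)" by blast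
  then obtain s where "s = int (sum_mset M)" "s \<ge> 0" "a < 0 \<Longrightarrow> - a \<le> s" by blast
  moreover have "\<And>s::int. s \<ge> 0 \<Longrightarrow> (a < 0 \<Longrightarrow> - a \<le> s) \<Longrightarrow> \<bar>k\<bar> \<le> s + \<bar>n\<bar>"
    unfolding a_def min_def by (cases "k \<le> n - k"; cases "k < 0"; cases "n < k") (auto simp: abs_if split: if_splits)
  ultimately show ?thesis unfolding bnd_def by blast
qed

lemma vir_fin:
  assumes "bnd M n \<le> B"
  shows "vir e l n v M = (1/2) * (\<Sum>k\<in>{-B..B}. nord e k (n - k) v M) - l * of_int (n + 1) * heis e n v M"
proof -
  have "Sum_any (\<lambda>k. nord e k (n - k) v M) = (\<Sum>k\<in>{-B..B}. nord e k (n - k) v M)"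
    apply (rule Sum_any.expand_superset)
    using nord_bound[of e _ n v M] assms by fastforce+
  then show ?thesis by (simp add: vir_def)
qed



lemma heis_add: "heis e n (\<lambda>M. f M + g M) = (\<lambda>M. heis e n f M + heis e n g M)"
  by (simp add: heis_eq fun_eq_iff algebra_simps)
lemma heis_diff: "heis e n (\<lambda>M. f M - g M) = (\<lambda>M. heis e n f M - heis e n g M)"
  by (simp add: heis_eq fun_eq_iff algebra_simps)
lemma heis_scale: "heis e n (\<lambda>M. c * f M) = (\<lambda>M. c * heis e n f M)"
  by (simp add: heis_eq fun_eq_iff algebra_simps)
lemma heis_zero: "heis e n (\<lambda>M. 0) = (\<lambda>M. 0)"
  by (simp add: heis_eq fun_eq_iff)
lemma heis_sum: "heis e n (\<lambda>M. \<Sum>i\<in>I. f i M) = (\<lambda>M. \<Sum>i\<in>I. heis e n (f i) M)"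
  by (simp add: heis_eq fun_eq_iff sum_distrib_left)

lemma nord_add: "nord e a b (\<lambda>M. f M + g M) = (\<lambda>M. nord e a b f M + nord e a b g M)"
  by (simp add: nord_def heis_add)
lemma nord_scale: "nord e a b (\<lambda>M. c * f M) = (\<lambda>M. c * nord e a b f M)"
  by (simp add: nord_def heis_scale)
lemma nord_diff: "nord e a b (\<lambda>M. f M - g M) = (\<lambda>M. nord e a b f M - nord e a b g M)"
  by (simp add: nord_def heis_diff)
lemma nord_zero: "nord e a b (\<lambda>M. 0) = (\<lambda>M. 0)"
  by (simp add: nord_def heis_zero)

lemma vir_add: "vir e l n (\<lambda>M. f M + g M) = (\<lambda>M. vir e l n f M + vir e l n g M)"
proof
  fix M
  show "vir e l n (\<lambda>M. f M + g M) M = vir e l n f M + vir e l n g M"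
    by (simp add: vir_fin[of M n "bnd M n"] nord_add heis_add sum.distrib algebra_simps)
qed
lemma vir_scale: "vir e l n (\<lambda>M. c * f M) = (\<lambda>M. c * vir e l n f M)"
proof
  fix M
  show "vir e l n (\<lambda>M. c * f M) M = c * vir e l n f M"
    by (simp add: vir_fin[of M n "bnd M n"] nord_scale heis_scale sum_distrib_left algebra_simps)
qed
lemma vir_zero: "vir e l n (\<lambda>M. 0) = (\<lambda>M. 0)"
  by (simp add: vir_def nord_zero heis_zero fun_eq_iff)
lemma vir_diff: "vir e l n (\<lambda>M. f M - g M) = (\<lambda>M. vir e l n f M - vir e l n g M)"
proof
  fix M
  show "vir e l n (\<lambda>M. f M - g M) M = vir e l n f M - vir e l n g M"
    by (simp add: vir_fin[of M n "bnd M n"] nord_diff heis_diff sum_subtractf algebra_simps)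
qed
lemma vir_sum: "finite I \<Longrightarrow> vir e l n (\<lambda>M. \<Sum>i\<in>I. f i M) = (\<lambda>M. \<Sum>i\<in>I. vir e l n (f i) M)"
proof (induction I rule: finite_induct)
  case empty then show ?case by (simp add: vir_zero)
next
  case (insert x F)
  then show ?case by (simp add: vir_add)
qed

lemma heis_comm_fun:
  "heis e a (heis e b v) = (\<lambda>M. heis e b (heis e a v) M + (if a + b = 0 then of_int a * v M else 0))"
  using heis_comm by blast

lemma nord_eq_fun: "nord e a b v = (\<lambda>M. heis e a (heis e b v) M - (if b < a \<and> a + b = 0 then of_int a else 0) * v M)"
  by (auto simp: fun_eq_iff nord_eq)

lemma per_k:
  "nord e k (p - k) (heis e q w) M - heis e q (nord e k (p - k) w) M
   = (if k = - q then of_int k * heis e (p - k) w M else 0)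
   + (if k = p + q then of_int (p - k) * heis e k w M else 0)"
proof -
  define s where "s = (if p - k < k \<and> k + (p - k) = 0 then of_int k else (0::complex))"
  have 1: "nord e k (p - k) (heis e q w) M = heis e k (heis e (p - k) (heis e q w)) M - s * heis e q w M"
    by (simp add: nord_eq s_def)
  have 2: "heis e q (nord e k (p - k) w) M = heis e q (heis e k (heis e (p - k) w)) M - s * heis e q w M"
    by (simp add: nord_eq_fun[of e k "p - k" w] heis_diff heis_scale s_def)
  have 3: "heis e k (heis e (p - k) (heis e q w)) M
     = heis e k (heis e q (heis e (p - k) w)) M + (if p - k + q = 0 then of_int (p - k) * heis e k w M else 0)"
    by (simp add: heis_comm_fun[of e "p - k" q w] heis_add heis_scale heis_zero)
  have 4: "heis e k (heis e q (heis e (p - k) w)) M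
     = heis e q (heis e k (heis e (p - k) w)) M + (if k + q = 0 then of_int k * heis e (p - k) w M else 0)"
    by (rule heis_comm)
  have "k + q = 0 \<longleftrightarrow> k = - q" "p - k + q = 0 \<longleftrightarrow> k = p + q" by auto
  then show ?thesis using 1 2 3 4 by simp
qed

definition cc :: "complex \<Rightarrow> int \<Rightarrow> int \<Rightarrow> complex" where
  "cc l p q = (if p + q = 0 then l * of_int (p + 1) * of_int p else 0)"

lemma sum_hidx_le: "int (sum_mset (hidx q M)) \<le> int (sum_mset M) + \<bar>q\<bar>"
proof -
  have "sum_mset (M - {#x#}) \<le> sum_mset M" for x
  proof (cases "x \<in># M")
    case True
    then have "sum_mset M = x + sum_mset (M - {#x#})" by (rule sum_mset_remove)
    then show ?thesis by simp
  next
    case False then show ?thesis by simp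
  qed
  then have x: "int (sum_mset (M - {#nat (- q)#})) \<le> int (sum_mset M)" by simp
  show ?thesis using x by (auto simp: hidx_def)
qed

lemma vir_heis:
  "vir e l p (heis e q w) M = heis e q (vir e l p w) M - of_int q * heis e (p + q) w M - cc l p q * w M"
proof -
  define B where "B = bnd M p + \<bar>q\<bar> + \<bar>p\<bar>"
  have B1: "bnd M p \<le> B" unfolding B_def by simp
  have B2: "bnd (hidx q M) p \<le> B" unfolding B_def bnd_def using sum_hidx_le[of q M] by simp
  have B0: "bnd M p \<ge> 0" unfolding bnd_def by simp
  have inA: "- q \<in> {-B..B}" "p + q \<in> {-B..B}" using B0 unfolding B_def by auto
  have L: "vir e l p (heis e q w) M = (1/2) * (\<Sum>k\<in>{-B..B}. nord e k (p - k) (heis e q w) M)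
       - l * of_int (p + 1) * heis e p (heis e q w) M"
    by (rule vir_fin[OF B1])
  have R: "heis e q (vir e l p w) M = (1/2) * (\<Sum>k\<in>{-B..B}. heis e q (nord e k (p - k) w) M)
       - l * of_int (p + 1) * heis e q (heis e p w) M"
  proof -
    have "heis e q (vir e l p w) M = hcoef e q M * vir e l p w (hidx q M)" by (rule heis_eq)
    also have "\<dots> = hcoef e q M * ((1/2) * (\<Sum>k\<in>{-B..B}. nord e k (p - k) w (hidx q M))
       - l * of_int (p + 1) * heis e p w (hidx q M))" by (simp only: vir_fin[OF B2])
    also have "\<dots> = (1/2) * (\<Sum>k\<in>{-B..B}. hcoef e q M * nord e k (p - k) w (hidx q M))
       - l * of_int (p + 1) * (hcoef e q M * heis e p w (hidx q M))"
      by (simp add: sum_distrib_left algebra_simps)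
    also have "\<dots> = (1/2) * (\<Sum>k\<in>{-B..B}. heis e q (nord e k (p - k) w) M)
       - l * of_int (p + 1) * heis e q (heis e p w) M"
      by (simp only: heis_eq[symmetric])
    finally show ?thesis .
  qed
  have S: "(\<Sum>k\<in>{-B..B}. nord e k (p - k) (heis e q w) M) - (\<Sum>k\<in>{-B..B}. heis e q (nord e k (p - k) w) M)
     = 2 * (- of_int q * heis e (p + q) w M)"
  proof -
    have "(\<Sum>k\<in>{-B..B}. nord e k (p - k) (heis e q w) M) - (\<Sum>k\<in>{-B..B}. heis e q (nord e k (p - k) w) M)
      = (\<Sum>k\<in>{-B..B}. (if k = - q then of_int k * heis e (p - k) w M else 0)
         + (if k = p + q then of_int (p - k) * heis e k w M else 0))"
      by (simp add: sum_subtractf[symmetric] per_k)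
    also have "\<dots> = of_int (- q) * heis e (p + q) w M + of_int (- q) * heis e (p + q) w M"
      using inA by (simp add: sum.distrib)
    finally show ?thesis by simp
  qed
  have cc_eq: "cc l p q * w M = l * of_int (p + 1) * (if p + q = 0 then of_int p * w M else 0)"
    by (simp add: cc_def)
  have gen: "\<And>(X::complex) Y A Bv C D. X - Y = 2 * (- of_int q * D) \<Longrightarrow> A = Bv + C \<Longrightarrow>
     (1/2) * X - l * of_int (p + 1) * A = ((1/2) * Y - l * of_int (p + 1) * Bv) - of_int q * D - l * of_int (p + 1) * C"
    by (simp add: algebra_simps)
  show ?thesis
    unfolding L R cc_eq by (rule gen[OF S heis_comm])
qed



lemma vir_heis_fun:
  "vir e l p (heis e q w) = (\<lambda>M. heis e q (vir e l p w) M - of_int q * heis e (p + q) w M - cc l p q * w M)"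
  by (rule ext) (rule vir_heis)

definition Dop :: "complex \<Rightarrow> complex \<Rightarrow> int \<Rightarrow> int \<Rightarrow> fvec \<Rightarrow> fvec" where
  "Dop e l m n v = (\<lambda>M. vir e l m (vir e l n v) M - vir e l n (vir e l m v) M - of_int (m - n) * vir e l (m + n) v M)"

lemma cc_identity:
  "of_int k * (cc l m (n + k) - cc l n (m + k)) + of_int (m - n) * cc l (m + n) k = 0"
proof (cases "m + n + k = 0")
  case True
  then have k: "k = - m - n" by simp
  show ?thesis unfolding cc_def k by (simp add: algebra_simps)
next
  case False
  then show ?thesis by (simp add: cc_def algebra_simps)
qed

lemma Dop_heis: "Dop e l m n (heis e k v) M = heis e k (Dop e l m n v) M"
proof -
  have i1: "n + (m + k) = m + n + k" "m + (n + k) = m + n + k" by simp_all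
  have c: "(of_int k * (cc l m (n + k) - cc l n (m + k)) + of_int (m - n) * cc l (m + n) k) * v M = 0"
    by (simp only: cc_identity mult_zero_left)
  show ?thesis
    unfolding Dop_def
    apply (simp add: vir_heis_fun vir_diff vir_scale heis_diff heis_scale i1)
    apply (insert c)
    apply (simp add: algebra_simps)
    done
qed


lemma Dop_sum: "finite I \<Longrightarrow> Dop e l m n (\<lambda>M. \<Sum>i\<in>I. c i * f i M) M' = (\<Sum>i\<in>I. c i * Dop e l m n (f i) M')"
  by (simp add: Dop_def vir_sum vir_scale sum_subtractf sum_distrib_left right_diff_distrib mult.left_commute)

lemma Dop_zero: "Dop e l m n (\<lambda>M. 0) = (\<lambda>M. 0)"
  by (simp add: Dop_def vir_zero)

definition ev :: "nat multiset \<Rightarrow> fvec" where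
  "ev N = (\<lambda>M. if M = N then 1 else 0)"

lemma heis_neg_ev: "j > 0 \<Longrightarrow> heis e (- int j) (ev N) = ev (add_mset j N)"
  by (auto simp: fun_eq_iff heis_eq hcoef_def hidx_def ev_def)

lemma heis_pos_vac: "j > 0 \<Longrightarrow> heis e j (ev {#}) = (\<lambda>M. 0)"
  by (auto simp: fun_eq_iff heis_eq hcoef_def hidx_def ev_def)

definition Zp :: "fvec \<Rightarrow> bool" where
  "Zp v \<longleftrightarrow> (\<forall>M. 0 \<in># M \<longrightarrow> v M = 0)"

lemma hidx_Z: "0 \<in># M \<Longrightarrow> 0 \<in># hidx n M"
  by (auto simp: hidx_def in_diff_count)

lemma heis_Z: "Zp v \<Longrightarrow> Zp (heis e n v)"
  by (auto simp: Zp_def heis_eq hidx_Z)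

lemma nord_Z: "Zp v \<Longrightarrow> Zp (nord e a b v)"
  by (simp add: nord_def heis_Z)

lemma vir_Z: "Zp v \<Longrightarrow> Zp (vir e l n v)"
proof -
  assume Z: "Zp v"
  show ?thesis unfolding Zp_def
  proof (intro allI impI)
    fix M :: "nat multiset" assume M: "0 \<in># M"
    have "\<And>k. nord e k (n - k) v M = 0" using nord_Z[OF Z] M by (simp add: Zp_def)
    moreover have "heis e n v M = 0" using heis_Z[OF Z] M by (simp add: Zp_def)
    ultimately show "vir e l n v M = 0" by (simp add: vir_def)
  qed
qed

lemma Dop_Z: "Zp v \<Longrightarrow> Zp (Dop e l m n v)"
  using vir_Z unfolding Dop_def Zp_def by simp

lemma Dop_vac: "Dop e l m n (ev {#}) = (\<lambda>M. Dop e l m n (ev {#}) {#} * ev {#} M)"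
proof
  fix M
  show "Dop e l m n (ev {#}) M = Dop e l m n (ev {#}) {#} * ev {#} M"
  proof (cases "M = {#}")
    case True then show ?thesis by (simp add: ev_def)
  next
    case False
    show ?thesis
    proof (cases "0 \<in># M")
      case True
      have "Zp (ev {#})" by (simp add: Zp_def ev_def)
      then have "Zp (Dop e l m n (ev {#}))" by (rule Dop_Z)
      then show ?thesis using True False by (simp add: Zp_def ev_def)
    next
      case F0: False
      obtain j M' where M: "M = add_mset j M'" using False by (cases M) auto
      have j: "j > 0" using F0 M by (cases j) auto
      have "heis e (int j) (Dop e l m n (ev {#})) M' = Dop e l m n (heis e (int j) (ev {#})) M'"
        by (simp add: Dop_heis)
      also have "\<dots> = 0" using j by (simp add: heis_pos_vac Dop_zero)
      finally have "of_int (int j) * of_nat (count M' j + 1) * Dop e l m n (ev {#}) M = 0"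
        using j M by (simp add: heis_eq hcoef_def hidx_def)
      moreover have "(1 + of_nat (count M' j) :: complex) \<noteq> 0"
        using of_nat_neq_0[of "count M' j", where 'a=complex] by simp
      ultimately have "Dop e l m n (ev {#}) M = 0" using j by simp
      then show ?thesis using False by (simp add: ev_def)
    qed
  qed
qed

lemma Dop_ev: "0 \<notin># N \<Longrightarrow> Dop e l m n (ev N) = (\<lambda>M. Dop e l m n (ev {#}) {#} * ev N M)"
proof (induction N)
  case empty show ?case by (rule Dop_vac)
next
  case (add j N)
  have j: "j > 0" using add.prems by (cases j) auto
  have N: "0 \<notin># N" using add.prems by auto
  show ?case
  proof
    fix M
    have "Dop e l m n (ev (add_mset j N)) M = Dop e l m n (heis e (- int j) (ev N)) M"
      using j by (simp add: heis_neg_ev)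
    also have "\<dots> = heis e (- int j) (Dop e l m n (ev N)) M" by (rule Dop_heis)
    also have "\<dots> = Dop e l m n (ev {#}) {#} * heis e (- int j) (ev N) M"
      using add.IH[OF N] by (simp add: heis_scale)
    also have "\<dots> = Dop e l m n (ev {#}) {#} * ev (add_mset j N) M"
      using j by (simp add: heis_neg_ev)
    finally show "Dop e l m n (ev (add_mset j N)) M = Dop e l m n (ev {#}) {#} * ev (add_mset j N) M" .
  qed
qed

lemma Dop_scalar:
  assumes "v \<in> fock_space"
  shows "Dop e l m n v M = Dop e l m n (ev {#}) {#} * v M"
proof -
  define S where "S = {N. v N \<noteq> 0}"
  have fin: "finite S" using assms by (simp add: fock_space_def S_def)
  have v: "v = (\<lambda>M. \<Sum>N\<in>S. v N * ev N M)"
  proof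
    fix M
    have "(\<Sum>N\<in>S. v N * ev N M) = (\<Sum>N\<in>S. if N = M then v N else 0)"
      by (rule sum.cong) (auto simp: ev_def)
    also have "\<dots> = (if M \<in> S then v M else 0)" using fin by (rule sum.delta)
    also have "\<dots> = v M" by (auto simp: S_def)
    finally show "v M = (\<Sum>N\<in>S. v N * ev N M)" by simp
  qed
  have "Dop e l m n v M = (\<Sum>N\<in>S. v N * Dop e l m n (ev N) M)"
    unfolding arg_cong[OF v, of "\<lambda>v. Dop e l m n v M"] by (rule Dop_sum[OF fin])
  also have "\<dots> = (\<Sum>N\<in>S. v N * (Dop e l m n (ev {#}) {#} * ev N M))"
  proof (rule sum.cong)
    fix N assume "N \<in> S"
    then have "0 \<notin># N" using assms by (auto simp: fock_space_def S_def)
    then have "Dop e l m n (ev N) M = Dop e l m n (ev {#}) {#} * ev N M"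
      by (rule fun_cong[OF Dop_ev])
    then show "v N * Dop e l m n (ev N) M = v N * (Dop e l m n (ev {#}) {#} * ev N M)"
      by (rule arg_cong)
  qed simp
  also have "\<dots> = Dop e l m n (ev {#}) {#} * (\<Sum>N\<in>S. v N * ev N M)"
    by (simp add: sum_distrib_left mult.left_commute)
  also have "\<dots> = Dop e l m n (ev {#}) {#} * v M" using fun_cong[OF v, of M] by simp
  finally show ?thesis .
qed



definition hom :: "int \<Rightarrow> fvec \<Rightarrow> bool" where
  "hom d v \<longleftrightarrow> (\<forall>M. v M \<noteq> 0 \<longrightarrow> int (sum_mset M) = d)"

lemma heis_hom: "hom d v \<Longrightarrow> hom (d - n) (heis e n v)"
  unfolding hom_def
proof (intro allI impI)
  fix M :: "nat multiset"
  assume h: "\<forall>M. v M \<noteq> 0 \<longrightarrow> int (sum_mset M) = d" and nz: "heis e n v M \<noteq> 0"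
  then have c: "hcoef e n M \<noteq> 0" and vv: "v (hidx n M) \<noteq> 0" by (auto simp: heis_eq)
  have s: "int (sum_mset (hidx n M)) = int (sum_mset M) + n"
  proof (cases "n < 0")
    case True
    then have "nat (- n) \<in># M" using c by (auto simp: hcoef_def split: if_splits)
    then have "sum_mset M = nat (- n) + sum_mset (M - {#nat (-n)#})"
      by (rule sum_mset_remove)
    then show ?thesis using True by (simp add: hidx_def)
  next
    case False then show ?thesis by (auto simp: hidx_def)
  qed
  show "int (sum_mset M) = d - n" using h vv s by force
qed

lemma nord_hom: "hom d v \<Longrightarrow> hom (d - (a + b)) (nord e a b v)"
proof -
  assume h: "hom d v"
  have e1: "d - (a + b) = d - b - a" and e2: "d - (a + b) = d - a - b" by simp_all
  have 1: "hom (d - (a + b)) (heis e a (heis e b v))" by (subst e1) (intro heis_hom h)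
  have 2: "hom (d - (a + b)) (heis e b (heis e a v))" by (subst e2) (intro heis_hom h)
  show ?thesis using 1 2 by (simp add: nord_def)
qed

lemma vir_hom: "hom d v \<Longrightarrow> hom (d - n) (vir e l n v)"
  unfolding hom_def
proof (intro allI impI)
  fix M :: "nat multiset"
  assume h: "\<forall>M. v M \<noteq> 0 \<longrightarrow> int (sum_mset M) = d" and nz: "vir e l n v M \<noteq> 0"
  have hv: "hom d v" using h by (simp add: hom_def)
  show "int (sum_mset M) = d - n"
  proof (cases "\<exists>k. nord e k (n - k) v M \<noteq> 0")
    case True
    then obtain k where "nord e k (n - k) v M \<noteq> 0" by blast
    then show ?thesis using nord_hom[OF hv, of k "n - k" e] by (simp add: hom_def)
  next
    case False
    then have "heis e n v M \<noteq> 0" using nz by (simp add: vir_def)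
    then show ?thesis using heis_hom[OF hv, of n e] by (simp add: hom_def)
  qed
qed

lemma vac_hom: "hom 0 (ev {#})" by (simp add: hom_def ev_def)

lemma Dop_const_neq:
  assumes "m + n \<noteq> 0"
  shows "Dop e l m n (ev {#}) {#} = 0"
proof -
  have h1: "hom (0 - n - m) (vir e l m (vir e l n (ev {#})))" by (rule vir_hom[OF vir_hom[OF vac_hom]])
  have h2: "hom (0 - m - n) (vir e l n (vir e l m (ev {#})))" by (rule vir_hom[OF vir_hom[OF vac_hom]])
  have h3: "hom (0 - (m + n)) (vir e l (m + n) (ev {#}))" by (rule vir_hom[OF vac_hom])
  have "vir e l m (vir e l n (ev {#})) {#} = 0" "vir e l n (vir e l m (ev {#})) {#} = 0"
      "vir e l (m + n) (ev {#}) {#} = 0"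
    using h1 h2 h3 assms unfolding hom_def by force+
  then show ?thesis by (simp add: Dop_def)
qed


lemma vir_pos_vac: "m > 0 \<Longrightarrow> vir e l m (ev {#}) = (\<lambda>M. 0)"
proof
  fix M assume m: "m > 0"
  have "hom (0 - m) (vir e l m (ev {#}))" by (rule vir_hom[OF vac_hom])
  moreover have "int (sum_mset M) \<ge> 0" by simp
  ultimately show "vir e l m (ev {#}) M = 0" using m unfolding hom_def by force
qed

lemma heis0: "heis e 0 f = (\<lambda>M. e * f M)"
  by (simp add: fun_eq_iff heis_eq hcoef_def hidx_def)

lemma vir0_vac: "vir e l 0 (ev {#}) {#} = e * e / 2 - l * e"
proof -
  have "bnd {#} 0 \<le> 0" by (simp add: bnd_def)
  from vir_fin[OF this] show ?thesis
    by (simp add: nord_def heis0 ev_def)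
qed

lemma nord_vac_zero:
  assumes "max k (n - k) > 0"
  shows "nord e k (n - k) (ev {#}) M = 0"
  using assms heis_pos_vac[of "max k (n - k)" e]
  by (auto simp: nord_def max_def heis_zero split: if_splits)

lemma vir_neg_vac:
  assumes m: "m > 0"
  shows "vir e l (- m) (ev {#}) = (\<lambda>M. (1/2) * (\<Sum>k\<in>{-m..0}. heis e k (heis e (- m - k) (ev {#})) M)
             - l * of_int (1 - m) * heis e (- m) (ev {#}) M)"
proof
  fix M
  define B where "B = bnd M (- m) + m"
  have B: "bnd M (- m) \<le> B" using m by (simp add: B_def)
  have sub: "{-m..0} \<subseteq> {-B..B}" using m unfolding B_def bnd_def by auto
  have "(\<Sum>k\<in>{-B..B}. nord e k (- m - k) (ev {#}) M) = (\<Sum>k\<in>{-m..0}. nord e k (- m - k) (ev {#}) M)"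
    by (rule sum.mono_neutral_right) (use sub in \<open>auto intro!: nord_vac_zero\<close>)
  also have "\<dots> = (\<Sum>k\<in>{-m..0}. heis e k (heis e (- m - k) (ev {#})) M)"
  proof (rule sum.cong)
    fix k assume "k \<in> {-m..0}"
    show "nord e k (- m - k) (ev {#}) M = heis e k (heis e (- m - k) (ev {#})) M"
      using m by (simp add: nord_eq)
  qed simp
  finally show "vir e l (- m) (ev {#}) M = (1/2) * (\<Sum>k\<in>{-m..0}. heis e k (heis e (- m - k) (ev {#})) M)
             - l * of_int (1 - m) * heis e (- m) (ev {#}) M"
    using vir_fin[OF B, of e l "ev {#}"] by simp
qed

lemma vir_heis_neg_empty:
  assumes "p > 0"
  shows "vir e l m (heis e (- p) X) {#} = of_int p * heis e (m - p) X {#} - cc l m (- p) * X {#}"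
  using assms by (simp add: vir_heis heis_eq hcoef_def)


lemma vir_heis_m_vac: "m > 0 \<Longrightarrow> vir e l m (heis e (- m) (ev {#})) {#} = of_int m * e - l * of_int (m + 1) * of_int m"
  by (simp add: vir_heis_neg_empty heis0 cc_def ev_def)

lemma per_k_vac:
  assumes m: "m > 0" and k: "k \<in> {-m..0}"
  shows "vir e l m (heis e k (heis e (- m - k) (ev {#}))) {#}
     = of_int ((- k) * (m + k)) + (if k = 0 \<or> k = - m then e * (of_int m * e - l * of_int (m + 1) * of_int m) else 0)"
proof -
  consider "k = 0" | "k = - m" | "- m < k" "k < 0" using k by force
  then show ?thesis
  proof cases
    case 1
    then show ?thesis using m by (simp add: heis0 vir_scale vir_heis_m_vac)
  next
    case 2
    then show ?thesis using m by (simp add: heis0 heis_scale vir_scale vir_heis_m_vac)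
  next
    case 3
    define p where "p = - k"
    define q where "q = m + k"
    have p: "p > 0" "k = - p" and q: "q > 0" "- m - k = - q" "m - p = q" using 3 by (auto simp: p_def q_def)
    have eqk: "heis e k (heis e (- m - k) (ev {#})) = heis e (- p) (heis e (- q) (ev {#}))"
      using p(2) q(2) by simp
    have "vir e l m (heis e k (heis e (- m - k) (ev {#}))) {#}
        = of_int p * heis e q (heis e (- q) (ev {#})) {#} - cc l m (- p) * heis e (- q) (ev {#}) {#}"
      unfolding eqk using vir_heis_neg_empty[OF p(1), of e l m "heis e (- q) (ev {#})"] q(3) by simp
    also have "\<dots> = of_int p * of_int q"
      using q(1) by (simp add: heis_eq hcoef_def hidx_def ev_def)
    finally show ?thesis using 3 by (simp add: p_def q_def)
  qed
qed

lemma sum_lin_int: "2 * (\<Sum>k\<in>{- int N..0}. - k) = int N * (int N + 1)"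
proof (induction N)
  case 0 then show ?case by simp
next
  case (Suc N)
  have h: "{- int (Suc N)..0} = insert (- int (Suc N)) {- int N..0}" by auto
  have "(\<Sum>k\<in>{- int (Suc N)..0}. - k) = int (Suc N) + (\<Sum>k\<in>{- int N..0}. - k)"
    unfolding h by simp
  then show ?case using Suc.IH by (simp add: algebra_simps)
qed

lemma sum_g_step:
  "(\<Sum>k\<in>{- int (Suc N)..0}. (- k) * (int (Suc N) + k))
      = (\<Sum>k\<in>{- int N..0}. (- k) * (int N + k)) + (\<Sum>k\<in>{- int N..0}. - k)"
proof -
  have h: "{- int (Suc N)..0} = insert (- int (Suc N)) {- int N..0}" by auto
  have "(\<Sum>k\<in>{- int (Suc N)..0}. (- k) * (int (Suc N) + k))
      = (\<Sum>k\<in>{- int N..0}. (- k) * (int (Suc N) + k))"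
    unfolding h by simp
  also have "\<dots> = (\<Sum>k\<in>{- int N..0}. (- k) * (int N + k) + (- k))"
    by (rule sum.cong) (simp_all add: algebra_simps)
  also have "\<dots> = (\<Sum>k\<in>{- int N..0}. (- k) * (int N + k)) + (\<Sum>k\<in>{- int N..0}. - k)"
    by (rule sum.distrib)
  finally show ?thesis .
qed

lemma poly_aux: "6 * a = int N ^ 3 - int N \<Longrightarrow> 2 * b = int N * (int N + 1)
   \<Longrightarrow> 6 * (a + b) = int (Suc N) ^ 3 - int (Suc N)"
  by (simp add: algebra_simps power3_eq_cube)

lemma sum_g_int:
  "6 * (\<Sum>k\<in>{- int N..0}. (- k) * (int N + k)) = int N ^ 3 - int N"
proof (induction N)
  case 0 then show ?case by simp
next
  case (Suc N)
  show ?case unfolding sum_g_step by (rule poly_aux[OF Suc.IH sum_lin_int])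
qed

lemma poly_final:
  fixes e l mm G :: complex
  assumes "G = (mm ^ 3 - mm) / 6"
  shows "(1/2) * (G + 2 * (e * (mm * e - l * (mm + 1) * mm))) - l * (1 - mm) * (mm * e - l * (mm + 1) * mm)
        - 0 - (2 * mm) * (e * e / 2 - l * e) = (1 - 12 * l ^ 2) / 12 * (mm ^ 3 - mm)"
  unfolding assms by (simp add: field_simps power2_eq_square power3_eq_cube)

lemma Dop_const_pos:
  assumes m: "m > 0"
  shows "Dop e l m (- m) (ev {#}) {#} = (1 - 12 * l ^ 2) / 12 * (of_int m ^ 3 - of_int m)"
proof -
  define E where "E = e * (of_int m * e - l * of_int (m + 1) * of_int m)"
  define G where "G = (\<Sum>k\<in>{-m..0}. (- k) * (m + k))"
  have G6: "6 * G = m ^ 3 - m"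
    using sum_g_int[of "nat m"] m by (simp add: G_def)
  have S: "(\<Sum>k\<in>{-m..0}. vir e l m (heis e k (heis e (- m - k) (ev {#}))) {#}) = of_int G + 2 * E"
  proof -
    have "(\<Sum>k\<in>{-m..0}. vir e l m (heis e k (heis e (- m - k) (ev {#}))) {#})
        = (\<Sum>k\<in>{-m..0}. of_int ((- k) * (m + k)) + ((if k = 0 then E else 0) + (if k = - m then E else 0)))"
      by (rule sum.cong) (use m in \<open>auto simp: per_k_vac E_def\<close>)
    also have "\<dots> = (\<Sum>k\<in>{-m..0}. of_int ((- k) * (m + k))) + ((\<Sum>k\<in>{-m..0}. if k = 0 then E else 0)
         + (\<Sum>k\<in>{-m..0}. if k = - m then E else 0))"
      by (simp only: sum.distrib)
    also have "\<dots> = of_int G + (E + E)"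
    proof -
      have sA: "(\<Sum>k\<in>{-m..0}. if k = 0 then E else 0) = E" using m by simp
      have sB: "(\<Sum>k\<in>{-m..0}. if k = - m then E else 0) = E" using m by simp
      have sG: "(\<Sum>k\<in>{-m..0}. (of_int ((- k) * (m + k)) :: complex)) = of_int G"
        unfolding G_def of_int_sum ..
      show ?thesis by (simp only: sA sB sG)
    qed
    finally show ?thesis by (simp only: mult_2)
  qed
  have W: "vir e l m (vir e l (- m) (ev {#})) {#}
      = (1/2) * (of_int G + 2 * E) - l * of_int (1 - m) * (of_int m * e - l * of_int (m + 1) * of_int m)"
  proof -
    have "vir e l m (vir e l (- m) (ev {#})) {#}
       = (1/2) * (\<Sum>k\<in>{-m..0}. vir e l m (heis e k (heis e (- m - k) (ev {#}))) {#})
         - l * of_int (1 - m) * vir e l m (heis e (- m) (ev {#})) {#}"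
      by (simp only: vir_neg_vac[OF m] vir_diff vir_scale vir_sum[OF finite_atLeastAtMost_int])
    then show ?thesis by (simp only: S vir_heis_m_vac[OF m])
  qed
  have Z: "vir e l (- m) (vir e l m (ev {#})) {#} = 0"
    using m by (simp add: vir_pos_vac vir_zero)
  have X: "Dop e l m (- m) (ev {#}) {#}
      = (1/2) * (of_int G + 2 * E) - l * of_int (1 - m) * (of_int m * e - l * of_int (m + 1) * of_int m)
        - 0 - of_int (2 * m) * (e * e / 2 - l * e)"
  proof -
    have "m + - m = 0" "m - - m = 2 * m" by simp_all
    then show ?thesis unfolding Dop_def W Z by (simp only: vir0_vac)
  qed
  moreover have Gq: "(of_int G :: complex) = (of_int m ^ 3 - of_int m) / 6"
  proof -
    have "(6::complex) * of_int G = of_int m ^ 3 - of_int m"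
      using arg_cong[OF G6, of "of_int :: int \<Rightarrow> complex"] by simp
    then show ?thesis by (simp add: field_simps)
  qed
  then have P: "(1/2) * (of_int G + 2 * (e * (of_int m * e - l * (of_int m + 1) * of_int m)))
        - l * (1 - of_int m) * (of_int m * e - l * (of_int m + 1) * of_int m)
        - 0 - (2 * of_int m) * (e * e / 2 - l * e) = (1 - 12 * l ^ 2) / 12 * (of_int m ^ 3 - of_int m)"
    by (rule poly_final)
  show ?thesis
    unfolding X E_def of_int_add of_int_diff of_int_mult of_int_1 of_int_numeral by (rule P)
qed


lemma Dop_swap: "Dop e l m n v M = - Dop e l n m v M"
  unfolding Dop_def by (simp add: add.commute algebra_simps)

lemma Dop_const:
  "Dop e l m n (ev {#}) {#} = (if m + n = 0 then (1 - 12 * l ^ 2) / 12 * (of_int m ^ 3 - of_int m) else 0)"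
proof (cases "m + n = 0")
  case False then show ?thesis by (simp add: Dop_const_neq)
next
  case True
  then have n: "n = - m" by simp
  consider "m > 0" | "m = 0" | "m < 0" by linarith
  then show ?thesis
  proof cases
    case 1 then show ?thesis using True n Dop_const_pos by simp
  next
    case 2 then show ?thesis using n by (simp add: Dop_def)
  next
    case 3
    have "Dop e l m n (ev {#}) {#} = - Dop e l n m (ev {#}) {#}"
      by (rule Dop_swap)
    also have "Dop e l n m (ev {#}) {#} = (1 - 12 * l ^ 2) / 12 * (of_int (- m) ^ 3 - of_int (- m))"
      using 3 Dop_const_pos[of "- m" e l] n by simp
    also have "- ((1 - 12 * l ^ 2) / 12 * (of_int (- m) ^ 3 - of_int (- m))) = (1 - 12 * l ^ 2) / 12 * (of_int m ^ 3 - of_int m)"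
      by (simp add: power3_eq_cube field_simps)
    finally show ?thesis using True by simp
  qed
qed

lemma virasoro:
  assumes "v \<in> fock_space"
  shows "vir e l m (vir e l n v) M - vir e l n (vir e l m v) M
     = of_int (m - n) * vir e l (m + n) v M
       + (if m + n = 0 then (1 - 12 * l ^ 2) / 12 * (of_int m ^ 3 - of_int m) else 0) * v M"
proof -
  define K where "K = (if m + n = 0 then (1 - 12 * l ^ 2) / 12 * (of_int m ^ 3 - of_int m) else (0::complex))"
  have 1: "Dop e l m n v M = Dop e l m n (ev {#}) {#} * v M" by (rule Dop_scalar[OF assms])
  have 2: "Dop e l m n v M = vir e l m (vir e l n v) M - vir e l n (vir e l m v) M - of_int (m - n) * vir e l (m + n) v M"
    by (simp add: Dop_def)
  have 3: "Dop e l m n (ev {#}) {#} = K" unfolding K_def by (rule Dop_const)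
  have "vir e l m (vir e l n v) M - vir e l n (vir e l m v) M - of_int (m - n) * vir e l (m + n) v M = K * v M"
    using 1 2 3 by simp
  then show ?thesis unfolding K_def[symmetric] by (simp add: diff_eq_eq add.commute)
qed



lemma fin_heis:
  assumes "finite {M. v M \<noteq> 0}"
  shows "finite {M. heis e n v M \<noteq> 0}"
proof -
  define g where "g N = (if n = 0 then N else if n < 0 then add_mset (nat (- n)) N else N - {#nat n#})" for N
  have "{M. heis e n v M \<noteq> 0} \<subseteq> g ` {M. v M \<noteq> 0}"
  proof
    fix M assume "M \<in> {M. heis e n v M \<noteq> 0}"
    then have c: "hcoef e n M \<noteq> 0" and vv: "v (hidx n M) \<noteq> 0" by (auto simp: heis_eq)
    have "g (hidx n M) = M"
    proof (cases "n < 0")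
      case True
      then have "nat (- n) \<in># M" using c by (auto simp: hcoef_def split: if_splits)
      then show ?thesis using True by (simp add: g_def hidx_def)
    next
      case False then show ?thesis by (auto simp: g_def hidx_def)
    qed
    then show "M \<in> g ` {M. v M \<noteq> 0}" using vv by force
  qed
  then show ?thesis using assms finite_surj by blast
qed

lemma fin_nord: "finite {M. v M \<noteq> 0} \<Longrightarrow> finite {M. nord e a b v M \<noteq> 0}"
  by (simp add: nord_def fin_heis)

lemma nord_bound2:
  assumes T: "\<forall>N. v N \<noteq> 0 \<longrightarrow> sum_mset N \<le> T"
    and nz: "nord e k (n - k) v M \<noteq> 0"
  shows "\<bar>k\<bar> \<le> int T + \<bar>n\<bar>"
proof -
  define a where "a = min k (n - k)"
  define b where "b = max k (n - k)"
  have ab: "a + b = n" "a \<le> b" "k = a \<or> k = b" unfolding a_def b_def by auto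
  have "nord e k (n - k) v M = heis e a (heis e b v) M"
    unfolding nord_def a_def b_def by (auto simp: min_def max_def)
  then have "v (hidx b (hidx a M)) \<noteq> 0" using nz by (auto simp: heis_eq)
  then have sT: "sum_mset (hidx b (hidx a M)) \<le> T" using T by blast
  show ?thesis
  proof (cases "b > 0")
    case True
    then have "nat b \<in># hidx b (hidx a M)" by (simp add: hidx_def)
    then have "nat b \<le> T" using sT mem_le_sum_mset order_trans by blast
    then have "b \<le> int T" using True by linarith
    then show ?thesis using ab by auto
  next
    case False
    then show ?thesis using ab by auto
  qed
qed

lemma fin_vir:
  assumes fin: "finite {M. v M \<noteq> 0}"
  shows "finite {M. vir e l n v M \<noteq> 0}"
proof -
  obtain T where T: "\<forall>N \<in> sum_mset ` {M. v M \<noteq> 0}. N \<le> T"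
    using finite_nat_set_iff_bounded_le fin by blast
  then have T': "\<forall>N. v N \<noteq> 0 \<longrightarrow> sum_mset N \<le> T" by auto
  define B where "B = int T + \<bar>n\<bar>"
  have "{M. vir e l n v M \<noteq> 0} \<subseteq> (\<Union>k\<in>{-B..B}. {M. nord e k (n - k) v M \<noteq> 0}) \<union> {M. heis e n v M \<noteq> 0}"
  proof
    fix M assume M: "M \<in> {M. vir e l n v M \<noteq> 0}"
    show "M \<in> (\<Union>k\<in>{-B..B}. {M. nord e k (n - k) v M \<noteq> 0}) \<union> {M. heis e n v M \<noteq> 0}"
    proof (cases "\<exists>k. nord e k (n - k) v M \<noteq> 0")
      case True
      then obtain k where k: "nord e k (n - k) v M \<noteq> 0" by blast
      then have "\<bar>k\<bar> \<le> B" using nord_bound2[OF T' k] by (simp add: B_def)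
      then have "k \<in> {-B..B}" by auto
      then show ?thesis using k by blast
    next
      case False
      then show ?thesis using M by (simp add: vir_def)
    qed
  qed
  moreover have "finite ((\<Union>k\<in>{-B..B}. {M. nord e k (n - k) v M \<noteq> 0}) \<union> {M. heis e n v M \<noteq> 0})"
    using fin by (simp add: fin_nord fin_heis)
  ultimately show ?thesis by (rule finite_subset)
qed

lemma fock_Zp: "v \<in> fock_space \<longleftrightarrow> finite {M. v M \<noteq> 0} \<and> Zp v"
  by (auto simp: fock_space_def Zp_def)

lemma heis_fock: "v \<in> fock_space \<Longrightarrow> heis e n v \<in> fock_space"
  by (simp add: fock_Zp fin_heis heis_Z)

lemma vir_fock: "v \<in> fock_space \<Longrightarrow> vir e l n v \<in> fock_space"
  by (simp add: fock_Zp fin_vir vir_Z)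

lemma vadd_fock: "u \<in> fock_space \<Longrightarrow> v \<in> fock_space \<Longrightarrow> vadd u v \<in> fock_space"
proof -
  assume u: "u \<in> fock_space" and v: "v \<in> fock_space"
  have "{M. vadd u v M \<noteq> 0} \<subseteq> {M. u M \<noteq> 0} \<union> {M. v M \<noteq> 0}" by (auto simp: vadd_def)
  then show ?thesis using u v unfolding fock_space_def by (auto simp: vadd_def intro: finite_subset)
qed

lemma vscale_fock: "v \<in> fock_space \<Longrightarrow> vscale c v \<in> fock_space"
proof -
  assume v: "v \<in> fock_space"
  have "{M. vscale c v M \<noteq> 0} \<subseteq> {M. v M \<noteq> 0}" by (auto simp: vscale_def)
  then show ?thesis using v unfolding fock_space_def by (auto simp: vscale_def intro: finite_subset)
qed

lemma vsub_fock: "u \<in> fock_space \<Longrightarrow> v \<in> fock_space \<Longrightarrow> vsub u v \<in> fock_space"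
proof -
  assume u: "u \<in> fock_space" and v: "v \<in> fock_space"
  have "{M. vsub u v M \<noteq> 0} \<subseteq> {M. u M \<noteq> 0} \<union> {M. v M \<noteq> 0}" by (auto simp: vsub_def)
  then show ?thesis using u v unfolding fock_space_def by (auto simp: vsub_def intro: finite_subset)
qed



context
  fixes eta1 eta2 lam :: complex and phi0 :: "fvec \<Rightarrow> fvec"
  assumes neq: "eta1 \<noteq> eta2"
    and closed: "\<forall>v\<in>fock_space. phi0 v \<in> fock_space"
    and additive: "\<forall>u\<in>fock_space. \<forall>v\<in>fock_space. phi0 (vadd u v) = vadd (phi0 u) (phi0 v)"
    and homog: "\<forall>c. \<forall>v\<in>fock_space. phi0 (vscale c v) = vscale c (phi0 v)"
    and intertwines: "\<forall>m. \<forall>v\<in>fock_space. vir eta2 lam m (phi0 v) = phi0 (vir eta1 lam m v)"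
begin

lemma phi_lin:
  assumes "u \<in> fock_space" "w \<in> fock_space"
  shows "phi0 (\<lambda>M. a * u M + b * w M) = (\<lambda>M. a * phi0 u M + b * phi0 w M)"
proof -
  have "(\<lambda>M. a * u M + b * w M) = vadd (vscale a u) (vscale b w)" by (simp add: vadd_def vscale_def)
  then show ?thesis using assms additive homog vscale_fock by (simp add: vadd_def vscale_def)
qed

lemma phi_add:
  assumes "u \<in> fock_space" "w \<in> fock_space"
  shows "phi0 (\<lambda>M. u M + w M) = (\<lambda>M. phi0 u M + phi0 w M)"
  using phi_lin[OF assms, of 1 1] by simp

lemma phi_scale:
  assumes "u \<in> fock_space"
  shows "phi0 (\<lambda>M. c * u M) = (\<lambda>M. c * phi0 u M)"
  using homog assms by (simp add: vscale_def)

lemma claim1: "v \<in> fock_space \<Longrightarrow> phi_mode eta1 eta2 phi0 0 v = phi0 v"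
  using neq phi_scale[of v eta1]
  by (simp add: phi_mode_def vscale_def vsub_def heis0 fun_eq_iff field_simps)

lemma claim2_pt:
  assumes v: "v \<in> fock_space"
  shows "vcomm eta1 eta2 lam m (phi_mode eta1 eta2 phi0 n) v M
       = - of_int n * phi_mode eta1 eta2 phi0 (m + n) v M"
proof -
  define k where "k = 1 / (eta2 - eta1)"
  have fv: "phi0 v \<in> fock_space" using closed v by blast
  have hv: "heis eta1 n v \<in> fock_space" by (rule heis_fock[OF v])
  have hv2: "heis eta1 (m + n) v \<in> fock_space" by (rule heis_fock[OF v])
  have vv: "vir eta1 lam m v \<in> fock_space" by (rule vir_fock[OF v])
  have vhv: "vir eta1 lam m (heis eta1 n v) \<in> fock_space" by (rule vir_fock[OF hv])
  have P: "\<And>j w. phi_mode eta1 eta2 phi0 j w = (\<lambda>M. k * (heis eta2 j (phi0 w) M - phi0 (heis eta1 j w) M))"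
    by (simp add: phi_mode_def vscale_def vsub_def k_def fun_eq_iff)
  have A: "vir eta2 lam m (phi_mode eta1 eta2 phi0 n v) M
     = k * (heis eta2 n (vir eta2 lam m (phi0 v)) M - of_int n * heis eta2 (m + n) (phi0 v) M - cc lam m n * phi0 v M
            - phi0 (vir eta1 lam m (heis eta1 n v)) M)"
    using intertwines hv by (simp add: P vir_scale vir_diff vir_heis)
  have hvir: "heis eta1 n (vir eta1 lam m v) = (\<lambda>M. vir eta1 lam m (heis eta1 n v) M
        + (of_int n * heis eta1 (m + n) v M + cc lam m n * v M))"
    by (simp add: fun_eq_iff vir_heis)
  have Bq: "phi0 (heis eta1 n (vir eta1 lam m v)) M
     = phi0 (vir eta1 lam m (heis eta1 n v)) M + (of_int n * phi0 (heis eta1 (m + n) v) M + cc lam m n * phi0 v M)"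
  proof -
    have "phi0 (\<lambda>M. of_int n * heis eta1 (m + n) v M + cc lam m n * v M)
        = (\<lambda>M. of_int n * phi0 (heis eta1 (m + n) v) M + cc lam m n * phi0 v M)"
      by (rule phi_lin[OF hv2 v])
    moreover have "(\<lambda>M. of_int n * heis eta1 (m + n) v M + cc lam m n * v M) \<in> fock_space"
      using vadd_fock[OF vscale_fock[OF hv2] vscale_fock[OF v]] by (simp add: vadd_def vscale_def)
    ultimately show ?thesis unfolding hvir using phi_add[OF vhv] by simp
  qed
  have C: "phi_mode eta1 eta2 phi0 n (vir eta1 lam m v) M
     = k * (heis eta2 n (vir eta2 lam m (phi0 v)) M - phi0 (heis eta1 n (vir eta1 lam m v)) M)"
    using intertwines v by (simp add: P)
  show ?thesis
    unfolding vcomm_def vsub_def A C Bq by (simp add: P algebra_simps)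
qed

lemma claim2:
  "v \<in> fock_space \<Longrightarrow> vcomm eta1 eta2 lam m (phi_mode eta1 eta2 phi0 n) v
          = vscale (- of_int n) (phi_mode eta1 eta2 phi0 (m + n) v)"
  by (simp add: fun_eq_iff claim2_pt vscale_def)

lemma claim3:
  "v \<in> fock_space \<Longrightarrow> vsub (vcomm eta1 eta2 lam m (phi_mode eta1 eta2 phi0 n) v)
             (vcomm eta1 eta2 lam n (phi_mode eta1 eta2 phi0 m) v)
          = vscale (of_int (m - n)) (phi_mode eta1 eta2 phi0 (m + n) v)"
  by (simp add: fun_eq_iff claim2_pt vscale_def vsub_def add.commute algebra_simps)

lemma phi_mode_fock: "v \<in> fock_space \<Longrightarrow> phi_mode eta1 eta2 phi0 n v \<in> fock_space"
  unfolding phi_mode_def using closed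
  by (intro vscale_fock vsub_fock heis_fock) (auto intro: heis_fock)

lemma claim4a: "x \<in> fock_space \<times> fock_space \<Longrightarrow> ext_op eta1 eta2 lam phi0 n x \<in> fock_space \<times> fock_space"
  by (auto simp: ext_op_def intro!: vadd_fock vir_fock phi_mode_fock)

lemma phi_mode_add:
  assumes a: "a \<in> fock_space" and b: "b \<in> fock_space"
  shows "phi_mode eta1 eta2 phi0 n (vadd a b) = vadd (phi_mode eta1 eta2 phi0 n a) (phi_mode eta1 eta2 phi0 n b)"
proof -
  have h: "heis eta1 n (vadd a b) = vadd (heis eta1 n a) (heis eta1 n b)"
    by (simp add: vadd_def heis_add)
  have F1: "phi0 (vadd a b) = vadd (phi0 a) (phi0 b)" using additive a b by blast
  have F2: "phi0 (heis eta1 n (vadd a b)) = vadd (phi0 (heis eta1 n a)) (phi0 (heis eta1 n b))"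
    unfolding h using additive heis_fock[OF a] heis_fock[OF b] by blast
  show ?thesis
    unfolding phi_mode_def F1 F2
    by (simp add: vadd_def vsub_def vscale_def heis_add fun_eq_iff algebra_simps)
qed

lemma phi_mode_scale:
  assumes a: "a \<in> fock_space"
  shows "phi_mode eta1 eta2 phi0 n (vscale c a) = vscale c (phi_mode eta1 eta2 phi0 n a)"
proof -
  have h: "heis eta1 n (vscale c a) = vscale c (heis eta1 n a)"
    by (simp add: vscale_def heis_scale)
  have F1: "phi0 (vscale c a) = vscale c (phi0 a)" using homog a by blast
  have F2: "phi0 (heis eta1 n (vscale c a)) = vscale c (phi0 (heis eta1 n a))"
    unfolding h using homog heis_fock[OF a] by blast
  show ?thesis
    unfolding phi_mode_def F1 F2
    by (simp add: vsub_def vscale_def heis_scale fun_eq_iff algebra_simps)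
qed

lemma claim4b:
  assumes x: "x \<in> fock_space \<times> fock_space" and y: "y \<in> fock_space \<times> fock_space"
  shows "ext_op eta1 eta2 lam phi0 n (padd x y)
          = padd (ext_op eta1 eta2 lam phi0 n x) (ext_op eta1 eta2 lam phi0 n y)
      \<and> ext_op eta1 eta2 lam phi0 n (pscale c x) = pscale c (ext_op eta1 eta2 lam phi0 n x)"
proof -
  obtain u w where xu: "x = (u, w)" "u \<in> fock_space" "w \<in> fock_space" using x by auto
  obtain u' w' where yu: "y = (u', w')" "u' \<in> fock_space" "w' \<in> fock_space" using y by auto
  have 1: "ext_op eta1 eta2 lam phi0 n (padd x y)
          = padd (ext_op eta1 eta2 lam phi0 n x) (ext_op eta1 eta2 lam phi0 n y)"
    using xu yu
    by (simp add: ext_op_def padd_def phi_mode_add)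
       (simp add: vadd_def vir_add fun_eq_iff algebra_simps)
  have 2: "ext_op eta1 eta2 lam phi0 n (pscale c x) = pscale c (ext_op eta1 eta2 lam phi0 n x)"
    using xu
    by (simp add: ext_op_def pscale_def phi_mode_scale)
       (simp add: vadd_def vscale_def vir_scale fun_eq_iff algebra_simps)
  show ?thesis using 1 2 by simp
qed

lemma claim4c:
  assumes x: "x \<in> fock_space \<times> fock_space"
  shows "psub (ext_op eta1 eta2 lam phi0 m (ext_op eta1 eta2 lam phi0 n x))
             (ext_op eta1 eta2 lam phi0 n (ext_op eta1 eta2 lam phi0 m x))
          = padd (pscale (of_int (m - n)) (ext_op eta1 eta2 lam phi0 (m + n) x))
                 (pscale (if m + n = 0
                          then (1 - 12 * lam ^ 2) / 12 * (of_int m ^ 3 - of_int m) else 0) x)"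
proof -
  obtain u w where xu: "x = (u, w)" and u: "u \<in> fock_space" and w: "w \<in> fock_space" using x by auto
  define cst where "cst = (if m + n = 0 then (1 - 12 * lam ^ 2) / 12 * (of_int m ^ 3 - of_int m) else 0)"
  have V2: "\<And>M. vir eta2 lam m (vir eta2 lam n u) M - vir eta2 lam n (vir eta2 lam m u) M
     = of_int (m - n) * vir eta2 lam (m + n) u M + cst * u M"
    using virasoro[OF u] by (simp add: cst_def)
  have V1: "\<And>M. vir eta1 lam m (vir eta1 lam n w) M - vir eta1 lam n (vir eta1 lam m w) M
     = of_int (m - n) * vir eta1 lam (m + n) w M + cst * w M"
    using virasoro[OF w] by (simp add: cst_def)
  have C1: "\<And>M. vir eta2 lam m (phi_mode eta1 eta2 phi0 n w) M - phi_mode eta1 eta2 phi0 n (vir eta1 lam m w) M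
      = - of_int n * phi_mode eta1 eta2 phi0 (m + n) w M"
    using claim2_pt[OF w, of m n] by (simp add: vcomm_def vsub_def)
  have C2: "\<And>M. vir eta2 lam n (phi_mode eta1 eta2 phi0 m w) M - phi_mode eta1 eta2 phi0 m (vir eta1 lam n w) M
      = - of_int m * phi_mode eta1 eta2 phi0 (m + n) w M"
    using claim2_pt[OF w, of n m] by (simp add: vcomm_def vsub_def add.commute)
  have F: "\<And>M. (vir eta2 lam m (vir eta2 lam n u) M + vir eta2 lam m (phi_mode eta1 eta2 phi0 n w) M
               + phi_mode eta1 eta2 phi0 m (vir eta1 lam n w) M)
            - (vir eta2 lam n (vir eta2 lam m u) M + vir eta2 lam n (phi_mode eta1 eta2 phi0 m w) M
               + phi_mode eta1 eta2 phi0 n (vir eta1 lam m w) M)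
          = of_int (m - n) * (vir eta2 lam (m + n) u M + phi_mode eta1 eta2 phi0 (m + n) w M) + cst * u M"
  proof -
    fix M
    show "?thesis M"
      using V2[of M] C1[of M] C2[of M] by (simp add: algebra_simps)
  qed
  show ?thesis
    unfolding cst_def[symmetric] xu
    by (simp add: ext_op_def psub_def padd_def pscale_def vadd_def vsub_def vscale_def vir_add fun_eq_iff F V1)
qed

end


theorem mainTheorem3:
  fixes eta1 eta2 lam :: complex and phi0 :: "fvec \<Rightarrow> fvec"
  assumes neq: "eta1 \<noteq> eta2"
    and closed: "\<forall>v\<in>fock_space. phi0 v \<in> fock_space"
    and additive: "\<forall>u\<in>fock_space. \<forall>v\<in>fock_space. phi0 (vadd u v) = vadd (phi0 u) (phi0 v)"
    and homog: "\<forall>c. \<forall>v\<in>fock_space. phi0 (vscale c v) = vscale c (phi0 v)"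
    and intertwines: "\<forall>m. \<forall>v\<in>fock_space. vir eta2 lam m (phi0 v) = phi0 (vir eta1 lam m v)"
  shows
    "(\<forall>v\<in>fock_space. phi_mode eta1 eta2 phi0 0 v = phi0 v)
   \<and> (\<forall>m n. \<forall>v\<in>fock_space.
        vcomm eta1 eta2 lam m (phi_mode eta1 eta2 phi0 n) v
          = vscale (- of_int n) (phi_mode eta1 eta2 phi0 (m + n) v))
   \<and> (\<forall>m n. \<forall>v\<in>fock_space.
        vsub (vcomm eta1 eta2 lam m (phi_mode eta1 eta2 phi0 n) v)
             (vcomm eta1 eta2 lam n (phi_mode eta1 eta2 phi0 m) v)
          = vscale (of_int (m - n)) (phi_mode eta1 eta2 phi0 (m + n) v))
   \<and> (\<forall>n. \<forall>x\<in>fock_space \<times> fock_space.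
        ext_op eta1 eta2 lam phi0 n x \<in> fock_space \<times> fock_space)
   \<and> (\<forall>n. \<forall>x\<in>fock_space \<times> fock_space. \<forall>y\<in>fock_space \<times> fock_space. \<forall>c.
        ext_op eta1 eta2 lam phi0 n (padd x y)
          = padd (ext_op eta1 eta2 lam phi0 n x) (ext_op eta1 eta2 lam phi0 n y)
      \<and> ext_op eta1 eta2 lam phi0 n (pscale c x) = pscale c (ext_op eta1 eta2 lam phi0 n x))
   \<and> (\<forall>m n. \<forall>x\<in>fock_space \<times> fock_space.
        psub (ext_op eta1 eta2 lam phi0 m (ext_op eta1 eta2 lam phi0 n x))
             (ext_op eta1 eta2 lam phi0 n (ext_op eta1 eta2 lam phi0 m x))
          = padd (pscale (of_int (m - n)) (ext_op eta1 eta2 lam phi0 (m + n) x))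
                 (pscale (if m + n = 0
                          then (1 - 12 * lam ^ 2) / 12 * (of_int m ^ 3 - of_int m) else 0) x))"
  proof -
  note A = neq closed additive homog intertwines
  have 1: "\<forall>v\<in>fock_space. phi_mode eta1 eta2 phi0 0 v = phi0 v"
    using claim1[OF A] by blast
  have 2: "\<forall>m n. \<forall>v\<in>fock_space.
        vcomm eta1 eta2 lam m (phi_mode eta1 eta2 phi0 n) v
          = vscale (- of_int n) (phi_mode eta1 eta2 phi0 (m + n) v)"
    using claim2[OF A] by blast
  have 3: "\<forall>m n. \<forall>v\<in>fock_space.
        vsub (vcomm eta1 eta2 lam m (phi_mode eta1 eta2 phi0 n) v)
             (vcomm eta1 eta2 lam n (phi_mode eta1 eta2 phi0 m) v)
          = vscale (of_int (m - n)) (phi_mode eta1 eta2 phi0 (m + n) v)"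
    using claim3[OF A] by blast
  have 4: "\<forall>n. \<forall>x\<in>fock_space \<times> fock_space.
        ext_op eta1 eta2 lam phi0 n x \<in> fock_space \<times> fock_space"
    using claim4a[OF A] by blast
  have 5: "\<forall>n. \<forall>x\<in>fock_space \<times> fock_space. \<forall>y\<in>fock_space \<times> fock_space. \<forall>c.
        ext_op eta1 eta2 lam phi0 n (padd x y)
          = padd (ext_op eta1 eta2 lam phi0 n x) (ext_op eta1 eta2 lam phi0 n y)
      \<and> ext_op eta1 eta2 lam phi0 n (pscale c x) = pscale c (ext_op eta1 eta2 lam phi0 n x)"
  proof (intro allI ballI)
    fix n x y c assume "x \<in> fock_space \<times> fock_space" "y \<in> fock_space \<times> fock_space"
    then show "ext_op eta1 eta2 lam phi0 n (padd x y)
          = padd (ext_op eta1 eta2 lam phi0 n x) (ext_op eta1 eta2 lam phi0 n y)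
      \<and> ext_op eta1 eta2 lam phi0 n (pscale c x) = pscale c (ext_op eta1 eta2 lam phi0 n x)"
      by (rule claim4b[OF A])
  qed
  have 6: "\<forall>m n. \<forall>x\<in>fock_space \<times> fock_space.
        psub (ext_op eta1 eta2 lam phi0 m (ext_op eta1 eta2 lam phi0 n x))
             (ext_op eta1 eta2 lam phi0 n (ext_op eta1 eta2 lam phi0 m x))
          = padd (pscale (of_int (m - n)) (ext_op eta1 eta2 lam phi0 (m + n) x))
                 (pscale (if m + n = 0
                          then (1 - 12 * lam ^ 2) / 12 * (of_int m ^ 3 - of_int m) else 0) x)"
  proof (intro allI ballI)
    fix m n x assume "x \<in> fock_space \<times> fock_space"
    then show "psub (ext_op eta1 eta2 lam phi0 m (ext_op eta1 eta2 lam phi0 n x))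
             (ext_op eta1 eta2 lam phi0 n (ext_op eta1 eta2 lam phi0 m x))
          = padd (pscale (of_int (m - n)) (ext_op eta1 eta2 lam phi0 (m + n) x))
                 (pscale (if m + n = 0
                          then (1 - 12 * lam ^ 2) / 12 * (of_int m ^ 3 - of_int m) else 0) x)"
      by (rule claim4c[OF A])
  qed
  show ?thesis using 1 2 3 4 5 6 by (intro conjI)
qed

end
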